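(* Let $R=K[X_1,\dots,X_d]$ be a polynomial ring over a field $K$, $f$ a nonzero polynomial in $R$, and $\mathcal{J}_f=\bigcap_{n\ge1}\sqrt{J_{f^n}}$. Then $I:_R(f)^\infty=I:_R\mathcal{J}_f^\infty$ for all monomial ideals $I$ of $R$.
   Context: For a nonzero polynomial $g=\sum_{\mathbf{n}}a_{\mathbf{n}}X_1^{n_1}\cdots X_d^{n_d}$, $J_g$ is the monomial ideal generated by the monomials occurring in $g$ with nonzero coefficient. $I:_RJ^\infty=\bigcup_k(I:_RJ^k)$. *)

theory Defs
  imports "HOL-Library.Poly_Mapping"
begin

text \<open>Polynomial ring K[X_v : v in 'v] represented as ('v =>0 nat) =>0 K
  (monomial exponent vectors to coefficients); 'v finite, d = CARD('v).\<close>

type_synonym ('v, 'k) mpoly = "('v \<Rightarrow>\<^sub>0 nat) \<Rightarrow>\<^sub>0 'k"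

definition is_ideal :: "'a::comm_ring_1 set \<Rightarrow> bool" where
  "is_ideal I \<longleftrightarrow> 0 \<in> I \<and> (\<forall>a\<in>I. \<forall>b\<in>I. a + b \<in> I) \<and> (\<forall>r a. a \<in> I \<longrightarrow> r * a \<in> I)"

definition gen_ideal :: "'a::comm_ring_1 set \<Rightarrow> 'a set" where
  "gen_ideal S = \<Inter>{I. is_ideal I \<and> S \<subseteq> I}"

definition ideal_prod :: "'a::comm_ring_1 set \<Rightarrow> 'a set \<Rightarrow> 'a set" where
  "ideal_prod I J = gen_ideal {a * b | a b. a \<in> I \<and> b \<in> J}"

fun ideal_pow :: "'a::comm_ring_1 set \<Rightarrow> nat \<Rightarrow> 'a set" where
  "ideal_pow I 0 = UNIV"
| "ideal_pow I (Suc n) = ideal_prod I (ideal_pow I n)"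

definition colon :: "'a::comm_ring_1 set \<Rightarrow> 'a set \<Rightarrow> 'a set" where
  "colon I J = {r. \<forall>j\<in>J. r * j \<in> I}"

definition saturation :: "'a::comm_ring_1 set \<Rightarrow> 'a set \<Rightarrow> 'a set" where
  "saturation I J = (\<Union>k. colon I (ideal_pow J k))"

definition radical :: "'a::comm_ring_1 set \<Rightarrow> 'a set" where
  "radical J = {r. \<exists>n>0. r ^ n \<in> J}"

definition mono_of :: "('v \<Rightarrow>\<^sub>0 nat) \<Rightarrow> ('v, 'k::comm_ring_1) mpoly" where
  "mono_of \<alpha> = Poly_Mapping.single \<alpha> 1"

definition monomial_ideal :: "('v, 'k::comm_ring_1) mpoly set \<Rightarrow> bool" where
  "monomial_ideal I \<longleftrightarrow> is_ideal I \<and> I = gen_ideal (I \<inter> range mono_of)"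

definition Jmon :: "('v, 'k::comm_ring_1) mpoly \<Rightarrow> ('v, 'k) mpoly set" where
  "Jmon g = gen_ideal (mono_of ` Poly_Mapping.keys g)"

definition Jscript :: "('v, 'k::comm_ring_1) mpoly \<Rightarrow> ('v, 'k) mpoly set" where
  "Jscript f = (\<Inter>n\<in>{1..}. radical (Jmon (f ^ n)))"

end

theory Submission
  imports Defs
begin


lift_definition restr :: "('a \<Rightarrow> bool) \<Rightarrow> ('a \<Rightarrow>\<^sub>0 'b::zero) \<Rightarrow> 'a \<Rightarrow>\<^sub>0 'b"
  is "\<lambda>P p x. if P x then p x else 0"
  by (erule finite_subset[rotated]) auto

lemma lookup_restr: "Poly_Mapping.lookup (restr P p) x = (if P x then Poly_Mapping.lookup p x else 0)"
  by transfer simp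

lemma keys_restr: "Poly_Mapping.keys (restr P p) = {x \<in> Poly_Mapping.keys p. P x}"
  by (auto simp: in_keys_iff lookup_restr split: if_splits)

lemma restr_split: "p = restr P p + restr (\<lambda>x. \<not> P x) (p::'a \<Rightarrow>\<^sub>0 'b::monoid_add)"
  by (rule poly_mapping_eqI) (simp add: lookup_add lookup_restr)

lemma restr_add: "restr P (p + q) = restr P p + restr P (q::'a \<Rightarrow>\<^sub>0 'b::monoid_add)"
  by (rule poly_mapping_eqI) (simp add: lookup_add lookup_restr)

lemma restr_id: "(\<And>x. x \<in> Poly_Mapping.keys p \<Longrightarrow> P x) \<Longrightarrow> restr P p = p"
  by (rule poly_mapping_eqI) (auto simp: lookup_restr in_keys_iff)

lemma restr_zero: "(\<And>x. x \<in> Poly_Mapping.keys p \<Longrightarrow> \<not> P x) \<Longrightarrow> restr P p = 0"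
  by (rule poly_mapping_eqI) (auto simp: lookup_restr in_keys_iff)

lemma keys_nat_add: "Poly_Mapping.keys (x + y :: 'a \<Rightarrow>\<^sub>0 nat) = Poly_Mapping.keys x \<union> Poly_Mapping.keys y"
  by (auto simp: in_keys_iff lookup_add)

lemma poly_expand: "p = (\<Sum>\<nu>\<in>Poly_Mapping.keys p. Poly_Mapping.single \<nu> (Poly_Mapping.lookup p \<nu>))"
proof (rule poly_mapping_eqI)
  fix x
  have "Poly_Mapping.lookup (\<Sum>\<nu>\<in>Poly_Mapping.keys p. Poly_Mapping.single \<nu> (Poly_Mapping.lookup p \<nu>)) x = (\<Sum>\<nu>\<in>Poly_Mapping.keys p. (Poly_Mapping.lookup p \<nu> when \<nu> = x))"
    by (simp add: lookup_sum lookup_single)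
  also have "\<dots> = Poly_Mapping.lookup p x"
    by (cases "x \<in> Poly_Mapping.keys p") (auto simp: when_def in_keys_iff sum.delta' intro: sum.neutral)
  finally show "Poly_Mapping.lookup p x = Poly_Mapping.lookup (\<Sum>\<nu>\<in>Poly_Mapping.keys p. Poly_Mapping.single \<nu> (Poly_Mapping.lookup p \<nu>)) x" by simp
qed

section \<open>Ideals\<close>

lemma gen_ideal_ideal: "is_ideal (gen_ideal S)"
  unfolding gen_ideal_def is_ideal_def by auto

lemma gen_ideal_sub: "S \<subseteq> gen_ideal S"
  unfolding gen_ideal_def by auto

lemma gen_ideal_least: "is_ideal I \<Longrightarrow> S \<subseteq> I \<Longrightarrow> gen_ideal S \<subseteq> I"
  unfolding gen_ideal_def by auto

lemma gen_ideal_mono: "S \<subseteq> T \<Longrightarrow> gen_ideal S \<subseteq> gen_ideal T"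
  unfolding gen_ideal_def by auto

lemma ideal_mult: "is_ideal I \<Longrightarrow> a \<in> I \<Longrightarrow> r * a \<in> I"
  unfolding is_ideal_def by auto

lemma ideal_add: "is_ideal I \<Longrightarrow> a \<in> I \<Longrightarrow> b \<in> I \<Longrightarrow> a + b \<in> I"
  unfolding is_ideal_def by auto

lemma ideal_zero: "is_ideal I \<Longrightarrow> 0 \<in> I"
  unfolding is_ideal_def by auto

lemma ideal_sum: "is_ideal I \<Longrightarrow> (\<And>x. x \<in> A \<Longrightarrow> g x \<in> I) \<Longrightarrow> sum g A \<in> I"
  by (induction A rule: infinite_finite_induct) (auto simp: ideal_zero ideal_add)

lemma ideal_diff: "is_ideal I \<Longrightarrow> a \<in> I \<Longrightarrow> b \<in> I \<Longrightarrow> a - b \<in> I"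
  using ideal_add[of I a "(-1) * b"] ideal_mult[of I b "-1"] by simp

lemma ideal_prod_mono: "I \<subseteq> I' \<Longrightarrow> J \<subseteq> J' \<Longrightarrow> ideal_prod I J \<subseteq> ideal_prod I' J'"
  unfolding ideal_prod_def by (rule gen_ideal_mono) blast

lemma ideal_pow_mono: "I \<subseteq> I' \<Longrightarrow> ideal_pow I k \<subseteq> ideal_pow I' k"
  by (induction k) (auto intro: ideal_prod_mono[THEN subsetD])

lemma pow_in_ideal_pow: "f \<in> J \<Longrightarrow> f ^ k \<in> ideal_pow J k"
proof (induction k)
  case (Suc k)
  then show ?case unfolding ideal_pow.simps ideal_prod_def
    by (intro gen_ideal_sub[THEN subsetD]) auto
qed simp

lemma colon_anti: "J \<subseteq> J' \<Longrightarrow> colon I J' \<subseteq> colon I J"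
  unfolding colon_def by auto

section \<open>Monomial-membership ideals\<close>

definition MI :: "(('v \<Rightarrow>\<^sub>0 nat) \<Rightarrow> bool) \<Rightarrow> ('v, 'k::comm_ring_1) mpoly set" where
  "MI P = {h. \<forall>\<nu>\<in>Poly_Mapping.keys h. P \<nu>}"

definition upcl :: "(('v \<Rightarrow>\<^sub>0 nat) \<Rightarrow> bool) \<Rightarrow> bool" where
  "upcl P \<longleftrightarrow> (\<forall>\<nu> \<mu>. P \<nu> \<longrightarrow> P (\<mu> + \<nu>))"

lemma MI_ideal: "upcl P \<Longrightarrow> is_ideal (MI P)"
  unfolding is_ideal_def MI_def upcl_def
  apply (intro conjI)
    apply simp
   apply (auto dest!: keys_add[THEN subsetD])[1]
  apply (auto dest!: keys_mult[THEN subsetD])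
  done

lemma keys_mono_of: "Poly_Mapping.keys (mono_of \<nu> :: ('v, 'k::comm_ring_1) mpoly) = {\<nu>}"
  by (simp add: mono_of_def)

lemma mono_of_add: "mono_of (\<nu> + \<mu>) = mono_of \<nu> * (mono_of \<mu> :: ('v, 'k::comm_ring_1) mpoly)"
  by (simp add: mono_of_def mult_single)

lemma single_eq_mono: "Poly_Mapping.single \<nu> c = Poly_Mapping.single 0 c * (mono_of \<nu> :: ('v, 'k::comm_ring_1) mpoly)"
  by (simp add: mono_of_def mult_single)

lemma ideal_by_monos:
  fixes h :: "('v, 'k::comm_ring_1) mpoly"
  assumes "is_ideal I" "\<And>\<nu>. \<nu> \<in> Poly_Mapping.keys h \<Longrightarrow> mono_of \<nu> \<in> I"
  shows "h \<in> I"
  apply (subst poly_expand)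
  apply (rule ideal_sum[OF assms(1)])
  apply (subst single_eq_mono)
  apply (rule ideal_mult[OF assms(1) assms(2)])
  apply assumption
  done

lemma monomial_ideal_iff:
  fixes I :: "('v, 'k::comm_ring_1) mpoly set"
  assumes "monomial_ideal I"
  shows "h \<in> I \<longleftrightarrow> (\<forall>\<nu>\<in>Poly_Mapping.keys h. mono_of \<nu> \<in> I)"
proof
  have id: "is_ideal I" using assms unfolding monomial_ideal_def by simp
  have up: "upcl (\<lambda>\<nu>. mono_of \<nu> \<in> (I :: ('v, 'k) mpoly set))"
    unfolding upcl_def using id by (auto simp: mono_of_add intro: ideal_mult)
  have "I \<subseteq> MI (\<lambda>\<nu>. mono_of \<nu> \<in> I)"
    apply (subst assms[unfolded monomial_ideal_def, THEN conjunct2])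
    apply (rule gen_ideal_least[OF MI_ideal[OF up]])
    apply (auto simp: MI_def keys_mono_of)
    done
  moreover assume "h \<in> I"
  ultimately show "\<forall>\<nu>\<in>Poly_Mapping.keys h. mono_of \<nu> \<in> I" unfolding MI_def by auto
next
  assume "\<forall>\<nu>\<in>Poly_Mapping.keys h. mono_of \<nu> \<in> I"
  then show "h \<in> I" using assms unfolding monomial_ideal_def by (auto intro: ideal_by_monos)
qed

lemma mono_le:
  fixes I :: "('v, 'k::comm_ring_1) mpoly set"
  assumes "is_ideal I" "mono_of \<nu> \<in> I" "\<And>i. Poly_Mapping.lookup \<nu> i \<le> Poly_Mapping.lookup \<mu> i"
  shows "mono_of \<mu> \<in> I"
proof -
  have "\<mu> = (\<mu> - \<nu>) + \<nu>"
    by (rule poly_mapping_eqI) (use assms(3) in \<open>simp add: lookup_add lookup_minus\<close>)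
  then have "mono_of \<mu> = mono_of (\<mu> - \<nu>) * (mono_of \<nu> :: ('v, 'k) mpoly)"
    by (metis mono_of_add)
  then show ?thesis using assms by (simp add: ideal_mult)
qed



lemma exists_add_embedding:
  "\<exists>e :: ('v::finite \<Rightarrow>\<^sub>0 nat) \<Rightarrow> (nat \<Rightarrow>\<^sub>0 nat). inj e \<and> (\<forall>x y. e (x + y) = e x + e y)"
proof -
  obtain g :: "'v \<Rightarrow> nat" where g: "inj g"
    using finite_imp_inj_to_nat_seg[of "UNIV :: 'v set"] by auto
  define e where "e x = (\<Sum>i\<in>UNIV. Poly_Mapping.single (g i) (Poly_Mapping.lookup x i))" for x :: "'v \<Rightarrow>\<^sub>0 nat"
  have lk: "Poly_Mapping.lookup (e x) (g j) = Poly_Mapping.lookup x j" for x j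
  proof -
    have "Poly_Mapping.lookup (e x) (g j) = (\<Sum>i\<in>UNIV. (Poly_Mapping.lookup x i when g i = g j))"
      by (simp add: e_def lookup_sum lookup_single)
    also have "\<dots> = (\<Sum>i\<in>UNIV. (Poly_Mapping.lookup x i when i = j))"
      using g by (intro sum.cong) (auto simp: inj_eq)
    also have "\<dots> = Poly_Mapping.lookup x j" by (simp add: when_def)
    finally show ?thesis .
  qed
  have "inj e"
  proof (rule injI)
    fix x y assume "e x = e y"
    then show "x = y" by (metis lk poly_mapping_eqI)
  qed
  moreover have "e (x + y) = e x + e y" for x y
    by (simp add: e_def lookup_add single_add sum.distrib)
  ultimately show ?thesis by blast
qed

lemma mpoly_no_zero_div:
  fixes p q :: "('v::finite, 'k::idom) mpoly"
  assumes "p \<noteq> 0" "q \<noteq> 0"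
  shows "p * q \<noteq> 0"
proof -
  obtain e :: "('v \<Rightarrow>\<^sub>0 nat) \<Rightarrow> (nat \<Rightarrow>\<^sub>0 nat)" where e: "inj e" "\<And>x y. e (x + y) = e x + e y"
    using exists_add_embedding by blast
  have ex_max: "\<exists>a\<in>Poly_Mapping.keys r. \<forall>x\<in>Poly_Mapping.keys r. e x \<le> e a" if "r \<noteq> 0" for r :: "('v, 'k) mpoly"
  proof -
    have ne: "e ` Poly_Mapping.keys r \<noteq> {}" using that by simp
    have "Max (e ` Poly_Mapping.keys r) \<in> e ` Poly_Mapping.keys r" using ne by (intro Max_in) auto
    then obtain a where "a \<in> Poly_Mapping.keys r" "e a = Max (e ` Poly_Mapping.keys r)" by auto
    then show ?thesis by (metis Max_ge finite_imageI finite_keys imageI)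
  qed
  obtain a where a: "a \<in> Poly_Mapping.keys p" "\<And>x. x\<in>Poly_Mapping.keys p \<Longrightarrow> e x \<le> e a"
    using ex_max[OF assms(1)] by blast
  obtain b where b: "b \<in> Poly_Mapping.keys q" "\<And>x. x\<in>Poly_Mapping.keys q \<Longrightarrow> e x \<le> e b"
    using ex_max[OF assms(2)] by blast
  define p' where "p' = restr (\<lambda>x. \<not> x = a) p"
  define q' where "q' = restr (\<lambda>x. \<not> x = b) q"
  have pe: "p = Poly_Mapping.single a (Poly_Mapping.lookup p a) + p'"
    unfolding p'_def by (rule poly_mapping_eqI) (simp add: lookup_add lookup_restr lookup_single when_def)
  have qe: "q = Poly_Mapping.single b (Poly_Mapping.lookup q b) + q'"
    unfolding q'_def by (rule poly_mapping_eqI) (simp add: lookup_add lookup_restr lookup_single when_def)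
  have "p * q = Poly_Mapping.single (a + b) (Poly_Mapping.lookup p a * Poly_Mapping.lookup q b)
      + (Poly_Mapping.single a (Poly_Mapping.lookup p a) * q' + p' * q)"
  proof -
    have gen: "(A + p') * (B + q') = A * B + (A * q' + p' * (B + q'))" for A B :: "('v, 'k) mpoly"
      by (simp add: algebra_simps)
    show ?thesis using gen[of "Poly_Mapping.single a (Poly_Mapping.lookup p a)" "Poly_Mapping.single b (Poly_Mapping.lookup q b)"]
      pe qe by (simp add: mult_single)
  qed
  moreover have "a + b \<notin> Poly_Mapping.keys (Poly_Mapping.single a (Poly_Mapping.lookup p a) * q')"
  proof
    assume "a + b \<in> Poly_Mapping.keys (Poly_Mapping.single a (Poly_Mapping.lookup p a) * q')"
    then obtain x y where xy: "x \<in> Poly_Mapping.keys (Poly_Mapping.single a (Poly_Mapping.lookup p a))"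
      "y \<in> Poly_Mapping.keys q'" "a + b = x + y"
      using keys_mult by blast
    then have "x = a" by (simp split: if_splits)
    have "y \<in> Poly_Mapping.keys q" "y \<noteq> b" using xy(2) by (auto simp: q'_def keys_restr)
    then have "e y < e b" using b(2) e(1) by (metis inj_eq order_le_less)
    then have "e (x + y) < e (a + b)" using \<open>x = a\<close> e(2) by simp
    then show False using xy(3) by simp
  qed
  moreover have "a + b \<notin> Poly_Mapping.keys (p' * q)"
  proof
    assume "a + b \<in> Poly_Mapping.keys (p' * q)"
    then obtain x y where xy: "x \<in> Poly_Mapping.keys p'" "y \<in> Poly_Mapping.keys q" "a + b = x + y"
      using keys_mult by blast
    have "x \<in> Poly_Mapping.keys p" "x \<noteq> a" using xy(1) by (auto simp: p'_def keys_restr)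
    then have "e x < e a" using a(2) e(1) by (metis inj_eq order_le_less)
    then have "e (x + y) < e (a + b)" using b(2)[OF xy(2)] e(2) by (simp add: add_less_le_mono)
    then show False using xy(3) by simp
  qed
  ultimately have "Poly_Mapping.lookup (p * q) (a + b) = Poly_Mapping.lookup p a * Poly_Mapping.lookup q b"
    by (simp add: lookup_add in_keys_iff)
  also have "\<dots> \<noteq> 0" using a(1) b(1) by (simp add: in_keys_iff)
  finally show ?thesis by auto
qed

lemma mpoly_pow_nz:
  fixes p :: "('v::finite, 'k::idom) mpoly"
  shows "p \<noteq> 0 \<Longrightarrow> p ^ n \<noteq> 0"
  by (induction n) (auto simp: mpoly_no_zero_div)



lemma MI_diff: "a \<in> MI P \<Longrightarrow> b \<in> MI P \<Longrightarrow> a - b \<in> MI P"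
  unfolding MI_def
  by (auto simp: in_keys_iff lookup_minus)

lemma MI_restr: "restr P h \<in> MI P"
  by (simp add: MI_def keys_restr)

lemma lemmaC:
  fixes h f :: "('v::finite, 'k::idom) mpoly"
  assumes H1: "\<And>\<nu> \<nu>'. (\<forall>i. i \<notin> S \<longrightarrow> Poly_Mapping.lookup \<nu> i = Poly_Mapping.lookup \<nu>' i) \<Longrightarrow> \<Lambda> \<nu> \<Longrightarrow> \<Lambda> \<nu>'"
    and H2: "upcl \<Lambda>"
    and H3: "a \<in> Poly_Mapping.keys f" "Poly_Mapping.keys a \<subseteq> S"
    and H4: "h * f \<in> MI \<Lambda>"
  shows "h \<in> MI \<Lambda>"
proof (rule ccontr)
  assume nh: "h \<notin> MI \<Lambda>"
  define ho where "ho = restr (\<lambda>x. \<not> \<Lambda> x) h"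
  define hi where "hi = restr \<Lambda> h"
  have "h = hi + ho" unfolding ho_def hi_def by (rule restr_split)
  have "hi * f \<in> MI \<Lambda>" using MI_ideal[OF H2] MI_restr hi_def
    by (metis ideal_mult mult.commute)
  then have hof: "ho * f \<in> MI \<Lambda>" using MI_diff[OF H4] \<open>h = hi + ho\<close>
    by (metis add_diff_cancel_left' distrib_right)
  have hok: "\<And>x. x \<in> Poly_Mapping.keys ho \<Longrightarrow> \<not> \<Lambda> x" by (simp add: ho_def keys_restr)
  have "ho \<noteq> 0"
  proof
    assume "ho = 0"
    then have "h = hi" using \<open>h = hi + ho\<close> by simp
    then show False using nh MI_restr hi_def by metis
  qed
  define deg where "deg x = (\<Sum>i\<in>-S. Poly_Mapping.lookup x i)" for x :: "'v \<Rightarrow>\<^sub>0 nat"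
  define E where "E x y \<longleftrightarrow> (\<forall>i. i \<notin> S \<longrightarrow> Poly_Mapping.lookup x i = Poly_Mapping.lookup y i)" for x y :: "'v \<Rightarrow>\<^sub>0 nat"
  obtain \<nu>0 where n0: "\<nu>0 \<in> Poly_Mapping.keys ho" "\<And>x. x \<in> Poly_Mapping.keys ho \<Longrightarrow> deg \<nu>0 \<le> deg x"
  proof -
    have ne: "deg ` Poly_Mapping.keys ho \<noteq> {}" using \<open>ho \<noteq> 0\<close> by simp
    have "Min (deg ` Poly_Mapping.keys ho) \<in> deg ` Poly_Mapping.keys ho" using ne by (intro Min_in) auto
    then obtain a where "a \<in> Poly_Mapping.keys ho" "deg a = Min (deg ` Poly_Mapping.keys ho)" by auto
    then show ?thesis using that by (metis Min_le finite_imageI finite_keys imageI)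
  qed
  define h0 where "h0 = restr (\<lambda>x. E x \<nu>0) ho"
  define hr where "hr = restr (\<lambda>x. \<not> E x \<nu>0) ho"
  define f0 where "f0 = restr (\<lambda>x. \<forall>i. i \<notin> S \<longrightarrow> Poly_Mapping.lookup x i = 0) f"
  define fr where "fr = restr (\<lambda>x. \<not> (\<forall>i. i \<notin> S \<longrightarrow> Poly_Mapping.lookup x i = 0)) f"
  have hs: "ho = h0 + hr" unfolding h0_def hr_def by (rule restr_split)
  have fs: "f = f0 + fr" unfolding f0_def fr_def by (rule restr_split)
  have "\<nu>0 \<in> Poly_Mapping.keys h0" using n0(1) by (simp add: h0_def keys_restr E_def)
  then have "h0 \<noteq> 0" by auto
  have "a \<in> Poly_Mapping.keys f0" using H3 by (auto simp: f0_def keys_restr in_keys_iff)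
  then have "f0 \<noteq> 0" by auto
  have "h0 * f0 \<noteq> 0" using \<open>h0 \<noteq> 0\<close> \<open>f0 \<noteq> 0\<close> by (rule mpoly_no_zero_div)
  then obtain \<nu> where nu: "\<nu> \<in> Poly_Mapping.keys (h0 * f0)" by (metis keys_eq_empty ex_in_conv)
  then obtain x y where xy: "x \<in> Poly_Mapping.keys h0" "y \<in> Poly_Mapping.keys f0" "\<nu> = x + y"
    using keys_mult by blast
  have Enu: "E \<nu> \<nu>0" using xy by (auto simp: h0_def f0_def keys_restr E_def lookup_add)
  have eq: "ho * f = h0 * f0 + (h0 * fr + hr * f)"
    using hs fs by (simp add: algebra_simps)
  have n1: "\<nu> \<notin> Poly_Mapping.keys (h0 * fr)"
  proof
    assume "\<nu> \<in> Poly_Mapping.keys (h0 * fr)"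
    then obtain x y where xy: "x \<in> Poly_Mapping.keys h0" "y \<in> Poly_Mapping.keys fr" "\<nu> = x + y"
      using keys_mult by blast
    obtain i where "i \<notin> S" "Poly_Mapping.lookup y i \<noteq> 0" using xy(2) by (auto simp: fr_def keys_restr)
    moreover have "E x \<nu>0" using xy(1) by (simp add: h0_def keys_restr)
    ultimately show False using Enu xy(3) by (auto simp: E_def lookup_add)
  qed
  have n2: "\<nu> \<notin> Poly_Mapping.keys (hr * f)"
  proof
    assume "\<nu> \<in> Poly_Mapping.keys (hr * f)"
    then obtain x y where xy: "x \<in> Poly_Mapping.keys hr" "y \<in> Poly_Mapping.keys f" "\<nu> = x + y"
      using keys_mult by blast
    have xk: "x \<in> Poly_Mapping.keys ho" "\<not> E x \<nu>0" using xy(1) by (auto simp: hr_def keys_restr)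
    have "deg \<nu>0 = (\<Sum>i\<in>-S. Poly_Mapping.lookup x i + Poly_Mapping.lookup y i)"
      unfolding deg_def using Enu xy(3) by (intro sum.cong) (auto simp: E_def lookup_add)
    then have "deg \<nu>0 = deg x + deg y" by (simp add: deg_def sum.distrib)
    then have "deg y = 0" using n0(2)[OF xk(1)] by simp
    then have "\<forall>i. i \<notin> S \<longrightarrow> Poly_Mapping.lookup y i = 0" by (simp add: deg_def)
    then have "E x \<nu>0" using Enu xy(3) by (auto simp: E_def lookup_add)
    then show False using xk(2) by simp
  qed
  have "Poly_Mapping.lookup (ho * f) \<nu> = Poly_Mapping.lookup (h0 * f0) \<nu>"
    using n1 n2 by (simp add: eq lookup_add in_keys_iff)
  then have "\<nu> \<in> Poly_Mapping.keys (ho * f)" using nu by (simp add: in_keys_iff)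
  then have "\<Lambda> \<nu>" using hof by (simp add: MI_def)
  then have "\<Lambda> \<nu>0" using H1 Enu by (auto simp: E_def)
  then show False using hok n0(1) by simp
qed



lemma restr_mult:
  fixes p q :: "('v, 'k::comm_ring_1) mpoly"
  assumes R: "\<And>x y. R (x + y) \<longleftrightarrow> R x \<and> R y"
  shows "restr R (p * q) = restr R p * restr R q"
proof -
  define p1 where "p1 = restr R p"
  define p2 where "p2 = restr (\<lambda>x. \<not> R x) p"
  define q1 where "q1 = restr R q"
  define q2 where "q2 = restr (\<lambda>x. \<not> R x) q"
  have "p = p1 + p2" "q = q1 + q2" unfolding p1_def p2_def q1_def q2_def by (rule restr_split)+
  then have eq: "p * q = p1 * q1 + (p1 * q2 + p2 * q)" by (simp add: algebra_simps)
  have a: "restr R (p1 * q1) = p1 * q1"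
  proof (rule restr_id)
    fix z assume "z \<in> Poly_Mapping.keys (p1 * q1)"
    then obtain x y where "x \<in> Poly_Mapping.keys p1" "y \<in> Poly_Mapping.keys q1" "z = x + y"
      using keys_mult by blast
    then show "R z" by (simp add: p1_def q1_def keys_restr R)
  qed
  have b: "restr R (p1 * q2 + p2 * q) = 0"
  proof (rule restr_zero)
    fix z assume "z \<in> Poly_Mapping.keys (p1 * q2 + p2 * q)"
    then consider "z \<in> Poly_Mapping.keys (p1 * q2)" | "z \<in> Poly_Mapping.keys (p2 * q)"
      using keys_add[of "p1 * q2" "p2 * q"] by blast
    then show "\<not> R z"
    proof cases
      case 1
      then obtain x y where "x \<in> Poly_Mapping.keys p1" "y \<in> Poly_Mapping.keys q2" "z = x + y"
        using keys_mult by blast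
      then show ?thesis by (simp add: p1_def q2_def keys_restr R)
    next
      case 2
      then obtain x y where "x \<in> Poly_Mapping.keys p2" "y \<in> Poly_Mapping.keys q" "z = x + y"
        using keys_mult by blast
      then show ?thesis by (simp add: p2_def keys_restr R)
    qed
  qed
  have "restr R (p * q) = restr R (p1 * q1) + restr R (p1 * q2 + p2 * q)"
    by (simp only: eq restr_add)
  also have "\<dots> = p1 * q1" using a b by simp
  finally show ?thesis unfolding p1_def q1_def .
qed

lemma restr_one:
  assumes "R 0"
  shows "restr R (1 :: ('v, 'k::comm_ring_1) mpoly) = 1"
  by (rule restr_id) (simp add: assms)

lemma restr_pow:
  fixes p :: "('v, 'k::comm_ring_1) mpoly"
  assumes R: "\<And>x y. R (x + y) \<longleftrightarrow> R x \<and> R y" and R0: "R 0"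
  shows "restr R (p ^ n) = restr R p ^ n"
proof (induction n)
  case 0
  then show ?case by (simp add: restr_one R0)
next
  case (Suc n)
  then show ?case by (simp add: restr_mult[OF R])
qed

definition Q0 :: "('v, 'k::comm_ring_1) mpoly \<Rightarrow> ('v \<Rightarrow>\<^sub>0 nat) \<Rightarrow> bool" where
  "Q0 f \<nu> \<longleftrightarrow> (\<exists>a\<in>Poly_Mapping.keys f. \<forall>i. Poly_Mapping.lookup a i \<le> Poly_Mapping.lookup \<nu> i)"

definition Q1 :: "('v, 'k::comm_ring_1) mpoly \<Rightarrow> ('v \<Rightarrow>\<^sub>0 nat) \<Rightarrow> bool" where
  "Q1 f \<nu> \<longleftrightarrow> (\<exists>a\<in>Poly_Mapping.keys f. Poly_Mapping.keys a \<subseteq> Poly_Mapping.keys \<nu>)"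

lemma Jmon_MI: "Jmon f \<subseteq> (MI (Q0 f) :: ('v, 'k::comm_ring_1) mpoly set)"
  unfolding Jmon_def
proof (rule gen_ideal_least)
  show "is_ideal (MI (Q0 f) :: ('v, 'k) mpoly set)"
  proof (rule MI_ideal)
    show "upcl (Q0 f)" unfolding upcl_def Q0_def
      by (auto simp: lookup_add intro: trans_le_add2)
  qed
  show "mono_of ` Poly_Mapping.keys f \<subseteq> (MI (Q0 f) :: ('v, 'k) mpoly set)"
    by (auto simp: MI_def keys_mono_of Q0_def)
qed

lemma radical_MI:
  fixes f :: "('v::finite, 'k::idom) mpoly"
  shows "radical (Jmon f) \<subseteq> (MI (Q1 f) :: ('v, 'k) mpoly set)"
proof
  fix h assume "h \<in> radical (Jmon f)"
  then obtain n where n: "n > 0" "h ^ n \<in> Jmon f" by (auto simp: radical_def)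
  show "h \<in> (MI (Q1 f) :: ('v, 'k) mpoly set)" unfolding MI_def mem_Collect_eq
  proof (rule ccontr)
    assume "\<not> (\<forall>\<mu>\<in>Poly_Mapping.keys h. Q1 f \<mu>)"
    then obtain \<mu> where mu: "\<mu> \<in> Poly_Mapping.keys h" "\<not> Q1 f \<mu>" by blast
    define R where "R x \<longleftrightarrow> Poly_Mapping.keys x \<subseteq> Poly_Mapping.keys \<mu>" for x :: "'v \<Rightarrow>\<^sub>0 nat"
    have R: "R (x + y) \<longleftrightarrow> R x \<and> R y" for x y by (simp add: R_def keys_nat_add)
    have "\<mu> \<in> Poly_Mapping.keys (restr R h)" using mu by (simp add: keys_restr R_def)
    then have "restr R h \<noteq> 0" by auto
    then have "restr R h ^ n \<noteq> 0" by (rule mpoly_pow_nz)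
    moreover have "restr R (h ^ n) = restr R h ^ n" by (rule restr_pow) (simp_all only: R, simp add: R_def)
    ultimately have "restr R (h ^ n) \<noteq> 0" by simp
    then obtain \<nu> where "\<nu> \<in> Poly_Mapping.keys (restr R (h ^ n))" by (metis keys_eq_empty ex_in_conv)
    then have nu: "\<nu> \<in> Poly_Mapping.keys (h ^ n)" "R \<nu>" by (auto simp: keys_restr)
    then have "Q0 f \<nu>" using n(2) Jmon_MI by (auto simp: MI_def)
    then obtain a where "a \<in> Poly_Mapping.keys f" "\<forall>i. Poly_Mapping.lookup a i \<le> Poly_Mapping.lookup \<nu> i"
      by (auto simp: Q0_def)
    note a = this
    have "Poly_Mapping.keys a \<subseteq> Poly_Mapping.keys \<mu>"
    proof
      fix i assume "i \<in> Poly_Mapping.keys a"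
      then have "i \<in> Poly_Mapping.keys \<nu>" using a(2)
        by (metis in_keys_iff le_zero_eq)
      then show "i \<in> Poly_Mapping.keys \<mu>" using nu(2) by (auto simp: R_def)
    qed
    then have "Q1 f \<mu>" using a(1) by (auto simp: Q1_def)
    then show False using mu by simp
  qed
qed



definition nsm :: "nat \<Rightarrow> ('v \<Rightarrow>\<^sub>0 nat) \<Rightarrow> ('v \<Rightarrow>\<^sub>0 nat)" where
  "nsm c a = (\<Sum>j<c. a)"

lemma lookup_nsm: "Poly_Mapping.lookup (nsm c a) i = c * Poly_Mapping.lookup a i"
  by (simp add: nsm_def lookup_sum)

lemma partA:
  fixes f g :: "('v::finite, 'k::idom) mpoly" and I :: "('v, 'k) mpoly set"
  assumes I: "monomial_ideal I" and a: "a \<in> Poly_Mapping.keys f" and gf: "g * f ^ k \<in> I"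
  shows "\<forall>\<mu>\<in>Poly_Mapping.keys g. \<exists>c. mono_of (\<mu> + nsm c a) \<in> I"
proof -
  have id: "is_ideal I" using I by (simp add: monomial_ideal_def)
  define \<Lambda> where "\<Lambda> \<nu> \<longleftrightarrow> (\<exists>c. mono_of (\<nu> + nsm c a) \<in> I)" for \<nu>
  have H1: "\<Lambda> \<nu>'" if E: "\<forall>i. i \<notin> Poly_Mapping.keys a \<longrightarrow> Poly_Mapping.lookup \<nu> i = Poly_Mapping.lookup \<nu>' i"
    and L: "\<Lambda> \<nu>" for \<nu> \<nu>'
  proof -
    obtain c where c: "mono_of (\<nu> + nsm c a) \<in> I" using L by (auto simp: \<Lambda>_def)
    define s where "s = (\<Sum>i\<in>UNIV. Poly_Mapping.lookup \<nu> i)"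
    have "mono_of (\<nu>' + nsm (c + s) a) \<in> I"
    proof (rule mono_le[OF id c])
      fix i
      show "Poly_Mapping.lookup (\<nu> + nsm c a) i \<le> Poly_Mapping.lookup (\<nu>' + nsm (c + s) a) i"
      proof (cases "i \<in> Poly_Mapping.keys a")
        case True
        then have "Poly_Mapping.lookup a i \<ge> 1" by (simp add: in_keys_iff)
        have "Poly_Mapping.lookup \<nu> i \<le> s" unfolding s_def by (rule member_le_sum) auto
        also have "\<dots> \<le> s * Poly_Mapping.lookup a i" using \<open>_ \<ge> 1\<close> by simp
        finally show ?thesis by (simp add: lookup_add lookup_nsm algebra_simps)
      next
        case False
        then show ?thesis using E by (simp add: lookup_add lookup_nsm in_keys_iff)
      qed
    qed
    then show ?thesis by (auto simp: \<Lambda>_def)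
  qed
  have H2: "upcl \<Lambda>"
    unfolding upcl_def \<Lambda>_def
  proof (intro allI impI)
    fix \<nu> \<mu> assume "\<exists>c. mono_of (\<nu> + nsm c a) \<in> I"
    then obtain c where c: "mono_of (\<nu> + nsm c a) \<in> I" by blast
    have "mono_of (\<mu> + \<nu> + nsm c a) \<in> I"
      by (rule mono_le[OF id c]) (simp add: lookup_add)
    then show "\<exists>c. mono_of (\<mu> + \<nu> + nsm c a) \<in> I" by blast
  qed
  have base: "I \<subseteq> MI \<Lambda>"
  proof
    fix h assume "h \<in> I"
    then have "\<forall>\<nu>\<in>Poly_Mapping.keys h. mono_of \<nu> \<in> I" using monomial_ideal_iff[OF I] by blast
    then show "h \<in> MI \<Lambda>" unfolding MI_def \<Lambda>_def
      by (auto intro!: exI[of _ 0] simp: nsm_def)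
  qed
  have "g * f ^ k \<in> MI \<Lambda> \<Longrightarrow> g \<in> MI \<Lambda>" for k
  proof (induction k)
    case (Suc k)
    have gfk: "(g * f ^ k) * f \<in> MI \<Lambda>" using Suc.prems by (simp add: algebra_simps)
    have "g * f ^ k \<in> MI \<Lambda>"
      by (rule lemmaC[OF H1 H2 a order_refl gfk])
    then show ?case by (rule Suc.IH)
  qed simp
  then have "g \<in> MI \<Lambda>" using base gf by blast
  then show ?thesis by (simp add: MI_def \<Lambda>_def)
qed

definition Pm :: "('v, 'k::comm_ring_1) mpoly \<Rightarrow> nat \<Rightarrow> ('v \<Rightarrow>\<^sub>0 nat) \<Rightarrow> bool" where
  "Pm f n \<nu> \<longleftrightarrow> (\<exists>c. (\<Sum>a\<in>Poly_Mapping.keys f. c a) = n \<and>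
     (\<forall>a\<in>Poly_Mapping.keys f. \<forall>i\<in>Poly_Mapping.keys a. c a \<le> Poly_Mapping.lookup \<nu> i))"

lemma upcl_Pm: "upcl (Pm f n)"
  unfolding upcl_def Pm_def
  by (auto simp: lookup_add) (metis trans_le_add2)

lemma powMI:
  fixes f :: "('v, 'k::comm_ring_1) mpoly"
  assumes J: "J \<subseteq> MI (Q1 f)"
  shows "ideal_pow J n \<subseteq> MI (Pm f n)"
proof (induction n)
  case 0
  have "Pm f 0 \<nu>" for \<nu> unfolding Pm_def by (auto intro!: exI[of _ "\<lambda>_. 0"])
  then show ?case by (simp add: MI_def)
next
  case (Suc n)
  show ?case unfolding ideal_pow.simps ideal_prod_def
  proof (rule gen_ideal_least[OF MI_ideal[OF upcl_Pm]], safe)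
    fix p q assume p: "p \<in> J" and q: "q \<in> ideal_pow J n"
    show "p * q \<in> MI (Pm f (Suc n))" unfolding MI_def mem_Collect_eq
    proof
      fix z assume "z \<in> Poly_Mapping.keys (p * q)"
      then obtain x y where xy: "x \<in> Poly_Mapping.keys p" "y \<in> Poly_Mapping.keys q" "z = x + y"
        using keys_mult by blast
      have "Q1 f x" using p J xy(1) by (auto simp: MI_def)
      then obtain a0 where a0: "a0 \<in> Poly_Mapping.keys f" "Poly_Mapping.keys a0 \<subseteq> Poly_Mapping.keys x"
        by (auto simp: Q1_def)
      have "Pm f n y" using q Suc.IH xy(2) by (auto simp: MI_def)
      then obtain c where c: "(\<Sum>a\<in>Poly_Mapping.keys f. c a) = n"
        "\<And>a i. a\<in>Poly_Mapping.keys f \<Longrightarrow> i\<in>Poly_Mapping.keys a \<Longrightarrow> c a \<le> Poly_Mapping.lookup y i"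
        by (auto simp: Pm_def)
      define c' where "c' a = c a + (if a = a0 then 1 else 0)" for a
      have "(\<Sum>a\<in>Poly_Mapping.keys f. c' a) = Suc n"
        using a0(1) by (simp add: c'_def sum.distrib c(1))
      moreover have "c' a \<le> Poly_Mapping.lookup z i" if "a\<in>Poly_Mapping.keys f" "i\<in>Poly_Mapping.keys a" for a i
      proof (cases "a = a0")
        case True
        then have "i \<in> Poly_Mapping.keys x" using a0(2) that(2) by auto
        then have "Poly_Mapping.lookup x i \<ge> 1" by (simp add: in_keys_iff Suc_le_eq)
        then show ?thesis using c(2)[OF that] True by (simp add: c'_def xy(3) lookup_add)
      next
        case False
        then show ?thesis using c(2)[OF that] by (simp add: c'_def xy(3) lookup_add)
      qed
      ultimately show "Pm f (Suc n) z" unfolding Pm_def by blast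
    qed
  qed
qed



lemma principal_sub_Jscript:
  fixes f :: "('v, 'k::comm_ring_1) mpoly"
  shows "gen_ideal {f} \<subseteq> Jscript f"
proof -
  have "gen_ideal {f} \<subseteq> {r * f | r. True}"
  proof (rule gen_ideal_least)
    show "is_ideal {r * f | r. True}" unfolding is_ideal_def
    proof (intro conjI ballI allI impI)
      show "0 \<in> {r * f | r. True}" by (auto intro!: exI[of _ 0])
    next
      fix x y assume "x \<in> {r * f | r. True}" "y \<in> {r * f | r. True}"
      then obtain r s where "x = r * f" "y = s * f" by blast
      then have "x + y = (r + s) * f" by (simp add: distrib_right)
      then show "x + y \<in> {r * f | r. True}" by blast
    next
      fix t x assume "x \<in> {r * f | r. True}"
      then obtain r where "x = r * f" by blast
      then have "t * x = (t * r) * f" by (simp add: mult.assoc)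
      then show "t * x \<in> {r * f | r. True}" by blast
    qed
    show "{f} \<subseteq> {r * f | r. True}" by (auto intro!: exI[of _ 1])
  qed
  also have "{r * f | r. True} \<subseteq> Jscript f"
  proof safe
    fix r
    show "r * f \<in> Jscript f" unfolding Jscript_def
    proof
      fix n :: nat assume "n \<in> {1..}"
      then have "n > 0" by auto
      have "f ^ n \<in> Jmon (f ^ n)" unfolding Jmon_def
      proof (rule ideal_by_monos[OF gen_ideal_ideal])
        fix \<nu> assume "\<nu> \<in> Poly_Mapping.keys (f ^ n)"
        then have "mono_of \<nu> \<in> mono_of ` Poly_Mapping.keys (f ^ n)" by (rule imageI)
        then show "mono_of \<nu> \<in> gen_ideal (mono_of ` Poly_Mapping.keys (f ^ n))"
          by (rule gen_ideal_sub[THEN subsetD])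
      qed
      then have "r ^ n * f ^ n \<in> Jmon (f ^ n)" unfolding Jmon_def by (rule ideal_mult[OF gen_ideal_ideal])
      then have "(r * f) ^ n \<in> Jmon (f ^ n)" by (simp add: power_mult_distrib)
      then show "r * f \<in> radical (Jmon (f ^ n))" unfolding radical_def using \<open>n > 0\<close>
        by blast
    qed
  qed
  finally show ?thesis .
qed

lemma Jscript_sub: "Jscript f \<subseteq> radical (Jmon f)"
proof
  fix x assume "x \<in> Jscript f"
  then have "x \<in> radical (Jmon (f ^ 1))" unfolding Jscript_def by blast
  then show "x \<in> radical (Jmon f)" by simp
qed

theorem lemma6p3:
  fixes f :: "('v::finite, 'k::field) mpoly"
    and I :: "('v, 'k) mpoly set"
  assumes "f \<noteq> 0"
    and "monomial_ideal I"
  shows "saturation I (gen_ideal {f}) = saturation I (Jscript f)"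
proof
  show "saturation I (Jscript f) \<subseteq> saturation I (gen_ideal {f})"
    unfolding saturation_def
    using colon_anti[OF ideal_pow_mono[OF principal_sub_Jscript]] by blast
next
  show "saturation I (gen_ideal {f}) \<subseteq> saturation I (Jscript f)"
  proof
    fix g assume "g \<in> saturation I (gen_ideal {f})"
    then obtain k where "g \<in> colon I (ideal_pow (gen_ideal {f}) k)" by (auto simp: saturation_def)
    moreover have "f ^ k \<in> ideal_pow (gen_ideal {f}) k"
      by (rule pow_in_ideal_pow) (simp add: gen_ideal_sub[THEN subsetD])
    ultimately have gf: "g * f ^ k \<in> I" by (auto simp: colon_def)
    have id: "is_ideal I" using assms(2) by (simp add: monomial_ideal_def)
    define A where "A = Poly_Mapping.keys f"
    have finA: "finite A" and neA: "A \<noteq> {}" using assms(1) by (auto simp: A_def)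
    have "\<forall>p\<in>Poly_Mapping.keys g \<times> A. \<exists>c. mono_of (fst p + nsm c (snd p)) \<in> I"
      using partA[OF assms(2) _ gf] by (auto simp: A_def)
    then obtain cf where cf: "\<And>p. p \<in> Poly_Mapping.keys g \<times> A \<Longrightarrow> mono_of (fst p + nsm (cf p) (snd p)) \<in> I"
      using bchoice[OF \<open>\<forall>p\<in>_. \<exists>c. _\<close>] by blast
    define C0 where "C0 = (\<Sum>p\<in>Poly_Mapping.keys g \<times> A. cf p)"
    have C0: "mono_of (\<mu> + nsm C0 a) \<in> I" if "\<mu> \<in> Poly_Mapping.keys g" "a \<in> A" for \<mu> a
    proof -
      have le: "cf (\<mu>, a) \<le> C0" unfolding C0_def
        by (rule member_le_sum) (use that finA in auto)
      show ?thesis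
        by (rule mono_le[OF id cf[of "(\<mu>, a)"]]) (use that le in \<open>auto simp: lookup_add lookup_nsm intro: mult_le_mono1\<close>)
    qed
    define D where "D = (\<Sum>a\<in>A. \<Sum>i\<in>UNIV. Poly_Mapping.lookup a i)"
    have Dle: "Poly_Mapping.lookup a i \<le> D" if "a \<in> A" for a i
    proof -
      have "Poly_Mapping.lookup a i \<le> (\<Sum>i\<in>UNIV. Poly_Mapping.lookup a i)" by (rule member_le_sum) auto
      also have "\<dots> \<le> D" unfolding D_def by (rule member_le_sum[where f="\<lambda>a. \<Sum>i\<in>UNIV. Poly_Mapping.lookup a i"]) (use that finA in auto)
      finally show ?thesis .
    qed
    define K where "K = C0 * D"
    define m where "m = card A * K"
    have "Jscript f \<subseteq> MI (Q1 f)" by (rule subset_trans[OF Jscript_sub radical_MI])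
    then have powm: "ideal_pow (Jscript f) m \<subseteq> MI (Pm f m)" by (rule powMI)
    have "g \<in> colon I (ideal_pow (Jscript f) m)" unfolding colon_def
    proof safe
      fix q assume "q \<in> ideal_pow (Jscript f) m"
      then have q: "q \<in> MI (Pm f m)" using powm by blast
      show "g * q \<in> I"
      proof (rule monomial_ideal_iff[OF assms(2), THEN iffD2], intro ballI)
        fix z assume "z \<in> Poly_Mapping.keys (g * q)"
        then obtain \<mu> y where xy: "\<mu> \<in> Poly_Mapping.keys g" "y \<in> Poly_Mapping.keys q" "z = \<mu> + y"
          using keys_mult by blast
        have "Pm f m y" using q xy(2) by (auto simp: MI_def)
        then obtain c where c: "(\<Sum>a\<in>A. c a) = card A * K"
          "\<And>a i. a\<in>A \<Longrightarrow> i\<in>Poly_Mapping.keys a \<Longrightarrow> c a \<le> Poly_Mapping.lookup y i"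
          by (auto simp: Pm_def A_def m_def)
        have "\<exists>a\<in>A. K \<le> c a"
        proof (rule ccontr)
          assume "\<not> (\<exists>a\<in>A. K \<le> c a)"
          then have "\<forall>a\<in>A. c a < K" by auto
          then have "(\<Sum>a\<in>A. c a) < (\<Sum>a\<in>A. K)" using finA neA by (intro sum_strict_mono) auto
          then show False using c(1) by simp
        qed
        then obtain a where a: "a \<in> A" "K \<le> c a" by blast
        show "mono_of z \<in> I"
        proof (rule mono_le[OF id C0[OF xy(1) a(1)]])
          fix i
          show "Poly_Mapping.lookup (\<mu> + nsm C0 a) i \<le> Poly_Mapping.lookup z i"
          proof (cases "i \<in> Poly_Mapping.keys a")
            case True
            have "C0 * Poly_Mapping.lookup a i \<le> C0 * D" using Dle[OF a(1)] by simp
            also have "\<dots> \<le> c a" using a(2) by (simp add: K_def)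
            also have "\<dots> \<le> Poly_Mapping.lookup y i" using c(2)[OF a(1) True] .
            finally show ?thesis by (simp add: xy(3) lookup_add lookup_nsm)
          next
            case False
            then show ?thesis by (simp add: xy(3) lookup_add lookup_nsm in_keys_iff)
          qed
        qed
      qed
    qed
    then show "g \<in> saturation I (Jscript f)" by (auto simp: saturation_def)
  qed
qed

end
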